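(* Let $L\ge 2$, $k\ge 2$ be integers, $\kappa:\{1,\dots,k-1\}\times\mathbb{N}\to\{0,\dots,L-1\}$ a map, and let $(b(n))_{n=0}^\infty$ be the $(L,k,\kappa)$-TM sequence over the letters $a_j=\exp\frac{2\pi\sqrt{-1}\,j}{L}$, $0\le j\le L-1$. Let $(a(n))_{n=0}^\infty$ be the sequence with $a(0)=0$, $0\le a(n)\le L-1$ and $a(n)\equiv\sum_{y=0}^\infty\sum_{s=1}^{k-1}\kappa(s,y)\,d(n;sk^y)\pmod L$. Then for every $n\ge 0$, $$\frac{L}{2\pi\sqrt{-1}}\log b(n)\equiv a(n)\pmod L$$ (for any determination of the logarithm).
   Context: $\mathbb{N}$ is the set of non-negative integers. Given pairwise distinct complex numbers $a_0,\dots,a_{L-1}$, let $f$ be the map on $\{a_0,\dots,a_{L-1}\}$ with $f(a_i)=a_{i+1}$ (indices modulo $L$), extended letterwise to finite words; $f^j$ its $j$-fold iterate, $f^0$ the identity. Define $A_0=a_0$ and $A_{n+1}=A_n\,f^{\kappa(1,n)}(A_n)\cdots f^{\kappa(k-1,n)}(A_n)$ (concatenation); $A_n$ is a prefix of $A_{n+1}$, and the infinite word $A_\infty=\lim A_n$ indexed from $0$ is the $(L,k,\kappa)$-TM sequence. Every $n\ge1$ has a unique $k$-adic expansion $n=\sum_{q=1}^r s_{n,q}k^{w_n(q)}$ with $1\le s_{n,q}\le k-1$, $0\le w_n(1)<\dots<w_n(r)$; $d(n;sk^y)=1$ if some $q$ has $s_{n,q}=s$ and $w_n(q)=y$, and $d(n;sk^y)=0$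 otherwise. *)

theory Defs
  imports "HOL-Analysis.Analysis" "HOL-Number_Theory.Cong"
begin

definition tm_letter :: "nat \<Rightarrow> nat \<Rightarrow> complex" where
  "tm_letter L j = exp (2 * of_real pi * \<i> * of_nat j / of_nat L)"

text \<open>The map f on the alphabet {a_0,...,a_(L-1)}: f(a_i) = a_(i+1 mod L).
  (Outside the alphabet it is the identity; this never matters.)\<close>
definition tm_f :: "nat \<Rightarrow> complex \<Rightarrow> complex" where
  "tm_f L z = (if \<exists>i<L. z = tm_letter L i
               then tm_letter L (Suc (THE i. i < L \<and> z = tm_letter L i) mod L)
               else z)"

fun tmA :: "nat \<Rightarrow> nat \<Rightarrow> (nat \<Rightarrow> nat \<Rightarrow> nat) \<Rightarrow> nat \<Rightarrow> complex list" where
  "tmA L k \<kappa> 0 = [tm_letter L 0]"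
| "tmA L k \<kappa> (Suc n) =
     tmA L k \<kappa> n @ concat (map (\<lambda>s. map ((tm_f L) ^^ (\<kappa> s n)) (tmA L k \<kappa> n)) [1..<k])"

text \<open>The infinite word A_infinity = lim A_n, indexed from 0: the n-th letter is the
  eventual value of the n-th letter of A_m.\<close>
definition tm_seq :: "nat \<Rightarrow> nat \<Rightarrow> (nat \<Rightarrow> nat \<Rightarrow> nat) \<Rightarrow> nat \<Rightarrow> complex" where
  "tm_seq L k \<kappa> n =
     (THE c. \<exists>m0. \<forall>m\<ge>m0. n < length (tmA L k \<kappa> m) \<and> tmA L k \<kappa> m ! n = c)"

text \<open>d(n; s k^y): 1 iff the k-adic expansion of n has digit s (1 <= s <= k-1)
  at position y.\<close>
definition tm_d :: "nat \<Rightarrow> nat \<Rightarrow> nat \<Rightarrow> nat \<Rightarrow> nat" where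
  "tm_d k n s y = (if 1 \<le> s \<and> s \<le> k - 1 \<and> n div k ^ y mod k = s then 1 else 0)"

end

theory Submission imports Defs begin

lemma letter_eq_iff_int:
  assumes "L > 0"
  shows "tm_letter L i = tm_letter L j \<longleftrightarrow> (\<exists>t::int. int i = int j + int L * t)"
proof -
  have pi0: "(of_real pi :: complex) \<noteq> 0" by simp
  have L0: "(of_nat L :: complex) \<noteq> 0" using assms by simp
  have "tm_letter L i = tm_letter L j \<longleftrightarrow>
     (\<exists>t::int. 2 * of_real pi * \<i> * of_nat i / of_nat L = 2 * of_real pi * \<i> * of_nat j / of_nat L + (of_int (2 * t) * pi) * \<i>)"
    unfolding tm_letter_def by (rule exp_eq)
  also have "\<dots> \<longleftrightarrow> (\<exists>t::int. (of_nat i :: complex) = of_nat j + of_nat L * of_int t)"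
  proof (intro ex_cong1)
    fix t :: int
    have "2 * of_real pi * \<i> * of_nat i / of_nat L = 2 * of_real pi * \<i> * of_nat j / of_nat L + (of_int (2 * t) * pi) * \<i>
      \<longleftrightarrow> (2 * of_real pi * \<i>) * (of_nat i :: complex) = (2 * of_real pi * \<i>) * (of_nat j + of_nat L * of_int t)"
      using L0 by (simp add: field_simps)
    also have "\<dots> \<longleftrightarrow> (of_nat i :: complex) = of_nat j + of_nat L * of_int t"
      using pi0 by (subst mult_cancel_left) simp
    finally show "2 * of_real pi * \<i> * of_nat i / of_nat L = 2 * of_real pi * \<i> * of_nat j / of_nat L + (of_int (2 * t) * pi) * \<i> \<longleftrightarrow> (of_nat i :: complex) = of_nat j + of_nat L * of_int t" .
  qed
  also have "\<dots> \<longleftrightarrow> (\<exists>t::int. int i = int j + int L * t)"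
  proof (intro ex_cong1)
    fix t :: int
    have "(of_nat i :: complex) = of_nat j + of_nat L * of_int t \<longleftrightarrow> (of_int (int i) :: complex) = of_int (int j + int L * t)"
      by simp
    also have "\<dots> \<longleftrightarrow> int i = int j + int L * t" by (rule of_int_eq_iff)
    finally show "(of_nat i :: complex) = of_nat j + of_nat L * of_int t \<longleftrightarrow> int i = int j + int L * t" .
  qed
  finally show ?thesis .
qed

lemma letter_eq_iff:
  assumes "L > 0"
  shows "tm_letter L i = tm_letter L j \<longleftrightarrow> i mod L = j mod L"
proof -
  have "i mod L = j mod L \<longleftrightarrow> [int i = int j] (mod int L)"
    by (simp add: cong_def) (metis of_nat_eq_iff of_nat_mod)
  also have "\<dots> \<longleftrightarrow> (\<exists>t::int. int i = int j + int L * t)"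
    by (metis cong_iff_lin cong_sym)
  finally show ?thesis using letter_eq_iff_int[OF assms] by simp
qed


lemma tm_f_letter:
  assumes "L > 0"
  shows "tm_f L (tm_letter L i) = tm_letter L (Suc i)"
proof -
  have ex: "\<exists>i'<L. tm_letter L i = tm_letter L i'"
    using assms letter_eq_iff[OF assms, of i "i mod L"] by (intro exI[of _ "i mod L"]) auto
  have the: "(THE i'. i' < L \<and> tm_letter L i = tm_letter L i') = i mod L"
  proof (rule the_equality)
    show "i mod L < L \<and> tm_letter L i = tm_letter L (i mod L)"
      using assms letter_eq_iff[OF assms] by simp
  next
    fix i' assume "i' < L \<and> tm_letter L i = tm_letter L i'"
    then show "i' = i mod L" using letter_eq_iff[OF assms] by simp
  qed
  show ?thesis unfolding tm_f_def using ex the letter_eq_iff[OF assms]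
    by (simp add: mod_Suc_eq)
qed

lemma tm_f_pow_letter:
  assumes "L > 0"
  shows "(tm_f L ^^ m) (tm_letter L i) = tm_letter L (i + m)"
  by (induction m) (simp_all add: tm_f_letter[OF assms])

lemma length_tmA:
  assumes "k \<ge> 1"
  shows "length (tmA L k \<kappa> n) = k ^ n"
proof (induction n)
  case 0 then show ?case by simp
next
  case (Suc n)
  have "length (tmA L k \<kappa> (Suc n)) = k ^ n + (k - 1) * k ^ n"
    using Suc by (simp add: length_concat comp_def sum_list_triv)
  also have "\<dots> = k ^ Suc n" using assms by (cases k) auto
  finally show ?case .
qed

lemma nth_concat_uniform:
  assumes "\<forall>s\<in>set ss. length (g s) = l" "i < length ss" "r < l"
  shows "concat (map g ss) ! (i * l + r) = g (ss ! i) ! r"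
  using assms
proof (induction ss arbitrary: i)
  case Nil then show ?case by simp
next
  case (Cons a ss)
  show ?case
  proof (cases i)
    case 0 then show ?thesis using Cons.prems by (simp add: nth_append)
  next
    case (Suc i')
    have "concat (map g (a # ss)) ! (i * l + r) = concat (map g ss) ! (i' * l + r)"
      using Cons.prems Suc by (simp add: nth_append)
    also have "\<dots> = g (ss ! i') ! r" using Cons Suc by simp
    finally show ?thesis using Suc by simp
  qed
qed

definition cS :: "nat \<Rightarrow> (nat \<Rightarrow> nat \<Rightarrow> nat) \<Rightarrow> nat \<Rightarrow> nat \<Rightarrow> nat" where
  "cS k \<kappa> m j = (\<Sum>y<m. \<Sum>s\<in>{1..k-1}. \<kappa> s y * tm_d k j s y)"

lemma digit_low:
  fixes n k :: nat
  assumes "y < m" "k \<ge> 1"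
  shows "n div k ^ y mod k = (n mod k ^ m) div k ^ y mod k"
proof -
  have km: "k ^ m = k ^ y * k ^ (m - y)" using assms by (metis le_add_diff_inverse less_imp_le power_add)
  have ky: "k ^ y > 0" using assms by simp
  have e: "n mod k ^ m = k ^ y * (n div k ^ y mod k ^ (m - y)) + n mod k ^ y"
    using km mod_mult2_eq[of n "k^y" "k^(m-y)"] by simp
  have "(n mod k ^ m) div k ^ y = n div k ^ y mod k ^ (m - y)"
    using ky by (subst e) simp
  moreover have "k dvd k ^ (m - y)" using assms by (simp add: dvd_power)
  ultimately show ?thesis by (simp add: mod_mod_cancel)
qed

lemma top_sum:
  fixes \<kappa> :: "nat \<Rightarrow> nat \<Rightarrow> nat"
  assumes "q < k"
  shows "(\<Sum>s\<in>{1..k-1}. \<kappa> s m * (if 1 \<le> s \<and> s \<le> k - 1 \<and> q = s then 1 else 0)) = (if q = 0 then 0 else \<kappa> q m)"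
proof -
  have "(\<Sum>s\<in>{1..k-1}. \<kappa> s m * (if 1 \<le> s \<and> s \<le> k - 1 \<and> q = s then 1 else 0))
      = (\<Sum>s\<in>{1..k-1}. (if q = s then \<kappa> s m else 0))"
    by (rule sum.cong) auto
  also have "\<dots> = (if q = 0 then 0 else \<kappa> q m)"
    using assms by (simp add: sum.delta)
  finally show ?thesis .
qed

lemma tmA_nth:
  assumes "L > 0" "k \<ge> 2"
  shows "n < k ^ m \<Longrightarrow> tmA L k \<kappa> m ! n = tm_letter L (cS k \<kappa> m n)"
proof (induction m arbitrary: n)
  case 0 then show ?case by (simp add: cS_def)
next
  case (Suc m)
  have k1: "k \<ge> 1" using assms by simp
  define q where "q = n div k ^ m"
  define r where "r = n mod k ^ m"
  have kpos: "k ^ m > 0" using k1 by simp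
  have nqr: "n = q * k ^ m + r" unfolding q_def r_def by (rule div_mult_mod_eq[symmetric])
  have qk: "q < k" using Suc.prems unfolding q_def
    by (simp add: less_mult_imp_div_less mult.commute)
  have rk: "r < k ^ m" unfolding r_def using kpos by simp
  have low: "cS k \<kappa> m n = cS k \<kappa> m r"
    unfolding cS_def tm_d_def r_def
    by (intro sum.cong refl) (metis digit_low[OF _ k1] lessThan_iff)
  have qq: "n div k ^ m mod k = q" using qk q_def by simp
  have top: "(\<Sum>s\<in>{1..k-1}. \<kappa> s m * tm_d k n s m) = (if q = 0 then 0 else \<kappa> q m)"
    unfolding tm_d_def qq by (rule top_sum[OF qk])
  have cSS: "cS k \<kappa> (Suc m) n = cS k \<kappa> m r + (if q = 0 then 0 else \<kappa> q m)"
    using low top by (simp add: cS_def)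
  show ?case
  proof (cases "q = 0")
    case True
    then have "n = r" using nqr by simp
    then show ?thesis using True cSS rk Suc.IH[of r] length_tmA[OF k1, of L \<kappa> m]
      by (simp add: nth_append)
  next
    case False
    have n2: "n = k ^ m + ((q - 1) * k ^ m + r)" using False nqr
      by (cases q) auto
    have "tmA L k \<kappa> (Suc m) ! n
       = concat (map (\<lambda>s. map ((tm_f L) ^^ (\<kappa> s m)) (tmA L k \<kappa> m)) [1..<k]) ! ((q - 1) * k ^ m + r)"
      using n2 length_tmA[OF k1, of L \<kappa> m] by (simp add: nth_append)
    also have "\<dots> = map ((tm_f L) ^^ (\<kappa> ([1..<k] ! (q - 1)) m)) (tmA L k \<kappa> m) ! r"
      by (rule nth_concat_uniform) (use length_tmA[OF k1] False qk rk in auto)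
    also have "\<dots> = ((tm_f L) ^^ (\<kappa> q m)) (tm_letter L (cS k \<kappa> m r))"
      using False qk rk Suc.IH[of r] length_tmA[OF k1, of L \<kappa> m] by simp
    also have "\<dots> = tm_letter L (cS k \<kappa> (Suc m) n)"
      using cSS False tm_f_pow_letter[OF assms(1)] by simp
    finally show ?thesis .
  qed
qed


lemma cS_full:
  assumes "k \<ge> 2" "n < k ^ m"
  shows "cS k \<kappa> m n = (\<Sum>y\<le>n. \<Sum>s\<in>{1..k-1}. \<kappa> s y * tm_d k n s y)"
proof -
  define g where "g y = (\<Sum>s\<in>{1..k-1}. \<kappa> s y * tm_d k n s y)" for y
  have g0: "g y = 0" if "n < k ^ y" for y
    unfolding g_def tm_d_def using that by simp
  have big: "n < k ^ y" if "y \<ge> m \<or> y > n" for y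
  proof (cases "y \<ge> m")
    case True
    have "k ^ m \<le> k ^ y" using True assms by (simp add: power_increasing)
    then show ?thesis using assms by linarith
  next
    case False
    then have "y > n" using that by simp
    have "y < 2 ^ y" by (rule less_exp)
    also have "2 ^ y \<le> k ^ y" using assms by (simp add: power_mono)
    finally show ?thesis using \<open>y > n\<close> by simp
  qed
  define M where "M = max m (Suc n)"
  have "(\<Sum>y<M. g y) = (\<Sum>y<m. g y)"
    by (rule sum.mono_neutral_right) (auto simp: M_def intro!: g0 big)
  moreover have "(\<Sum>y<M. g y) = (\<Sum>y\<le>n. g y)"
    by (rule sum.mono_neutral_right) (auto simp: M_def intro!: g0 big)
  ultimately show ?thesis unfolding cS_def g_def by simp
qed

lemma tm_seq_eq:
  assumes "L > 0" "k \<ge> 2"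
  shows "tm_seq L k \<kappa> n = tm_letter L (\<Sum>y\<le>n. \<Sum>s\<in>{1..k-1}. \<kappa> s y * tm_d k n s y)"
proof -
  define C where "C = (\<Sum>y\<le>n. \<Sum>s\<in>{1..k-1}. \<kappa> s y * tm_d k n s y)"
  have k1: "k \<ge> 1" using assms by simp
  have lt: "n < k ^ m" if "m \<ge> Suc n" for m
  proof -
    have "n < 2 ^ n" by (rule less_exp)
    also have "2 ^ n \<le> k ^ n" using assms by (simp add: power_mono)
    also have "k ^ n \<le> k ^ m" using that k1 by (simp add: power_increasing)
    finally show ?thesis .
  qed
  have P: "\<forall>m\<ge>Suc n. n < length (tmA L k \<kappa> m) \<and> tmA L k \<kappa> m ! n = tm_letter L C"
    using lt length_tmA[OF k1] tmA_nth[OF assms] cS_full[OF assms(2)] unfolding C_def by auto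
  have "(THE c. \<exists>m0. \<forall>m\<ge>m0. n < length (tmA L k \<kappa> m) \<and> tmA L k \<kappa> m ! n = c) = tm_letter L C"
  proof (rule the_equality)
    show "\<exists>m0. \<forall>m\<ge>m0. n < length (tmA L k \<kappa> m) \<and> tmA L k \<kappa> m ! n = tm_letter L C"
      using P by blast
  next
    fix c assume "\<exists>m0. \<forall>m\<ge>m0. n < length (tmA L k \<kappa> m) \<and> tmA L k \<kappa> m ! n = c"
    then obtain m0 where "\<forall>m\<ge>m0. n < length (tmA L k \<kappa> m) \<and> tmA L k \<kappa> m ! n = c" by blast
    then have "tmA L k \<kappa> (max m0 (Suc n)) ! n = c" by simp
    moreover have "tmA L k \<kappa> (max m0 (Suc n)) ! n = tm_letter L C" using P by simp
    ultimately show "c = tm_letter L C" by simp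
  qed
  then show ?thesis unfolding tm_seq_def C_def .
qed

theorem proposition2p1:
  fixes L k :: nat and \<kappa> :: "nat \<Rightarrow> nat \<Rightarrow> nat" and a :: "nat \<Rightarrow> nat"
  assumes "L \<ge> 2" and "k \<ge> 2"
    and "\<And>s y. 1 \<le> s \<Longrightarrow> s \<le> k - 1 \<Longrightarrow> \<kappa> s y < L"
    and "a 0 = 0"
    and "\<And>n. a n \<le> L - 1"
    and "\<And>n. [a n = (\<Sum>y\<le>n. \<Sum>s\<in>{1..k-1}. \<kappa> s y * tm_d k n s y)] (mod L)"
  shows "\<forall>n. \<forall>z. exp z = tm_seq L k \<kappa> n \<longrightarrow>
           (\<exists>m::int. of_nat L / (2 * of_real pi * \<i>) * z = of_int m \<and>
                     [m = int (a n)] (mod int L))"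
  proof (intro allI impI)
  fix n z
  assume ez: "exp z = tm_seq L k \<kappa> n"
  define C where "C = (\<Sum>y\<le>n. \<Sum>s\<in>{1..k-1}. \<kappa> s y * tm_d k n s y)"
  have L0: "L > 0" using assms by simp
  have "exp z = exp (2 * of_real pi * \<i> * of_nat C / of_nat L)"
    using ez tm_seq_eq[OF L0 assms(2)] unfolding C_def tm_letter_def by simp
  then obtain t :: int where zt: "z = 2 * of_real pi * \<i> * of_nat C / of_nat L + (of_int (2 * t) * pi) * \<i>"
    using exp_eq by blast
  have pi0: "(of_real pi :: complex) \<noteq> 0" by simp
  have Lc: "(of_nat L :: complex) \<noteq> 0" using L0 by simp
  have "of_nat L / (2 * of_real pi * \<i>) * z = of_int (int C + int L * t)"
    unfolding zt using pi0 Lc by (simp add: field_simps)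
  moreover have "[int C + int L * t = int (a n)] (mod int L)"
  proof -
    have "[int (a n) = int C] (mod int L)" using assms(6)[of n] unfolding C_def by (simp only: cong_int_iff)
    then have "[int C = int (a n)] (mod int L)" by (rule cong_sym)
    moreover have "[int C + int L * t = int C] (mod int L)" by (simp add: cong_iff_lin) (rule exI[of _ "-t"], simp)
    ultimately show ?thesis using cong_trans by blast
  qed
  ultimately show "\<exists>m::int. of_nat L / (2 * of_real pi * \<i>) * z = of_int m \<and> [m = int (a n)] (mod int L)"
    by blast
qed

end
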